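(* Let $f=f(x_1,\ldots,x_n)$ be a positive non-canalyzing Boolean function such that for every $i\in[n]$ both restrictions $f_{|x_i=0}$ and $f_{|x_i=1}$ are canalyzing. Then $f$ has at least $n+2$ extremal points.
   Context: $B=\{0,1\}$, $\preceq$ coordinatewise order on $B^n$. $f$ is positive if $f(\mathbf{x})=1$ and $\mathbf{x}\preceq\mathbf{y}$ imply $f(\mathbf{y})=1$. Extremal points are the $\preceq$-maximal false points and the $\preceq$-minimal true points of $f$. $f_{|x_i=\alpha}$ is obtained by fixing $x_i=\alpha$. $f$ is canalyzing if for some $i$, $f_{|x_i=0}$ or $f_{|x_i=1}$ is constant. *)

theory Defs
  imports Main
begin

text \<open>Points of B^n are boolean lists of length n; False = 0, True = 1.\<close>

definition cube :: "nat \<Rightarrow> bool list set" where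
  "cube n = {xs. length xs = n}"

definition vle :: "bool list \<Rightarrow> bool list \<Rightarrow> bool" where
  "vle xs ys = list_all2 (\<le>) xs ys"

definition positive_bf :: "nat \<Rightarrow> (bool list \<Rightarrow> bool) \<Rightarrow> bool" where
  "positive_bf n f = (\<forall>x\<in>cube n. \<forall>y\<in>cube n. f x \<and> vle x y \<longrightarrow> f y)"

text \<open>Restriction f_{|x_i = a}: a function of the remaining n-1 variables
  (variable i, 0-based, is fixed to a).\<close>
definition restr :: "nat \<Rightarrow> bool \<Rightarrow> (bool list \<Rightarrow> bool) \<Rightarrow> bool list \<Rightarrow> bool" where
  "restr i a f = (\<lambda>ys. f (take i ys @ a # drop i ys))"

definition constant_bf :: "nat \<Rightarrow> (bool list \<Rightarrow> bool) \<Rightarrow> bool" where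
  "constant_bf m g = (\<forall>x\<in>cube m. \<forall>y\<in>cube m. g x = g y)"

definition canalyzing :: "nat \<Rightarrow> (bool list \<Rightarrow> bool) \<Rightarrow> bool" where
  "canalyzing n f = (\<exists>i<n. constant_bf (n - 1) (restr i False f)
                          \<or> constant_bf (n - 1) (restr i True f))"

definition max_false_points :: "nat \<Rightarrow> (bool list \<Rightarrow> bool) \<Rightarrow> bool list set" where
  "max_false_points n f = {x \<in> cube n. \<not> f x \<and>
     (\<forall>y\<in>cube n. vle x y \<and> \<not> f y \<longrightarrow> y = x)}"

definition min_true_points :: "nat \<Rightarrow> (bool list \<Rightarrow> bool) \<Rightarrow> bool list set" where
  "min_true_points n f = {x \<in> cube n. f x \<and>
     (\<forall>y\<in>cube n. vle y x \<and> f y \<longrightarrow> y = x)}"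

definition extremal_points :: "nat \<Rightarrow> (bool list \<Rightarrow> bool) \<Rightarrow> bool list set" where
  "extremal_points n f = max_false_points n f \<union> min_true_points n f"

end

theory Submission
  imports Defs
begin

definition pt :: "nat \<Rightarrow> nat set \<Rightarrow> bool list" where
  "pt n S = map (\<lambda>k. k \<in> S) [0..<n]"

lemma pt_cube[simp]: "pt n S \<in> cube n"
  by (simp add: pt_def cube_def)

lemma pt_len[simp]: "length (pt n S) = n"
  by (simp add: pt_def)

lemma pt_nth[simp]: "k < n \<Longrightarrow> pt n S ! k = (k \<in> S)"
  by (simp add: pt_def)

lemma pt_inj: "S \<subseteq> {..<n} \<Longrightarrow> T \<subseteq> {..<n} \<Longrightarrow> pt n S = pt n T \<Longrightarrow> S = T"
  unfolding pt_def by (auto simp: map_eq_conv)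

lemma vle_iff: "x \<in> cube n \<Longrightarrow> y \<in> cube n \<Longrightarrow> vle x y \<longleftrightarrow> (\<forall>k<n. x!k \<longrightarrow> y!k)"
  by (auto simp: vle_def cube_def list_all2_conv_all_nth le_bool_def)

lemma monoD: "positive_bf n f \<Longrightarrow> x \<in> cube n \<Longrightarrow> y \<in> cube n \<Longrightarrow> (\<forall>k<n. x!k \<longrightarrow> y!k) \<Longrightarrow> f x \<Longrightarrow> f y"
  unfolding positive_bf_def using vle_iff by blast

lemma mono_pt: "positive_bf n f \<Longrightarrow> S \<inter> {..<n} \<subseteq> T \<Longrightarrow> f (pt n S) \<Longrightarrow> f (pt n T)"
  by (rule monoD[of n f "pt n S" "pt n T"]) auto

lemma finite_cube: "finite (cube n)"
proof -
  have "cube n = {xs. set xs \<subseteq> (UNIV::bool set) \<and> length xs = n}" by (auto simp: cube_def)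
  then show ?thesis using finite_lists_length_eq[of "UNIV::bool set" n] by simp
qed

definition del :: "nat \<Rightarrow> 'a list \<Rightarrow> 'a list" where
  "del i xs = take i xs @ drop (Suc i) xs"

lemma del_len: "i < length xs \<Longrightarrow> length (del i xs) = length xs - 1"
  by (simp add: del_def)

lemma ins_del: "i < length xs \<Longrightarrow> take i (del i xs) @ xs!i # drop i (del i xs) = xs"
  by (simp add: del_def id_take_nth_drop[symmetric])

lemma del_nth: "i < length xs \<Longrightarrow> j < length xs - 1 \<Longrightarrow>
   (del i xs)!j = xs!(if j<i then j else Suc j)"
  by (auto simp: del_def nth_append min_def)

lemma restr2:
  assumes "i < n" "j < n - 1" "constant_bf (n - 1 - 1) (restr j a (restr i b f))"
  shows "\<exists>k<n. k \<noteq> i \<and> (\<forall>p\<in>cube n. \<forall>q\<in>cube n. p!i = b \<longrightarrow> q!i = b \<longrightarrow> p!k = a \<longrightarrow> q!k = a \<longrightarrow> f p = f q)"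
proof -
  define k where "k = (if j < i then j else Suc j)"
  have key: "restr j a (restr i b f) (del j (del i p)) = f p \<and> del j (del i p) \<in> cube (n - 1 - 1)"
    if p: "p \<in> cube n" "p!i = b" "p!k = a" for p
  proof -
    have lp: "length p = n" using p by (simp add: cube_def)
    have ldp: "length (del i p) = n - 1" using lp assms by (simp add: del_len)
    have "(del i p)!j = a" using del_nth[of i p j] assms lp p k_def by simp
    hence X: "take j (del j (del i p)) @ a # drop j (del j (del i p)) = del i p"
      using ins_del[of j "del i p"] ldp assms by simp
    have "restr j a (restr i b f) (del j (del i p)) = restr i b f (del i p)"
      unfolding restr_def[of j] X by simp
    also have "\<dots> = f p" unfolding restr_def using ins_del[of i p] lp assms p by simp
    finally show ?thesis using ldp assms by (simp add: cube_def del_len)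
  qed
  have "k < n" "k \<noteq> i" using assms k_def by auto
  moreover have "\<forall>p\<in>cube n. \<forall>q\<in>cube n. p!i = b \<longrightarrow> q!i = b \<longrightarrow> p!k = a \<longrightarrow> q!k = a \<longrightarrow> f p = f q"
    using key assms(3) unfolding constant_bf_def by metis
  ultimately show ?thesis by blast
qed

lemma restr1:
  assumes "i < n" "\<not> constant_bf (n - 1) (restr i a f)"
  shows "\<exists>p\<in>cube n. p!i = a \<and> f p" "\<exists>q\<in>cube n. q!i = a \<and> \<not> f q"
proof -
  obtain x y where xy: "x \<in> cube (n-1)" "y \<in> cube (n-1)" "restr i a f x \<noteq> restr i a f y"
    using assms(2) unfolding constant_bf_def by blast
  have P: "take i z @ a # drop i z \<in> cube n \<and> (take i z @ a # drop i z)!i = a" if "z \<in> cube (n-1)" for z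
    using that assms(1) by (auto simp: cube_def nth_append min_def)
  show "\<exists>p\<in>cube n. p!i = a \<and> f p" "\<exists>q\<in>cube n. q!i = a \<and> \<not> f q"
    using P[OF xy(1)] P[OF xy(2)] xy(3) unfolding restr_def by metis+
qed

lemma minT_gen:
  assumes pos: "positive_bf n f" and T: "T \<subseteq> {..<n}" "f (pt n T)"
    and nb: "\<forall>k\<in>T. \<not> f (pt n (T - {k}))"
  shows "pt n T \<in> min_true_points n f"
  unfolding min_true_points_def
proof (intro CollectI conjI ballI impI)
  fix y assume y: "y \<in> cube n" "vle y (pt n T) \<and> f y"
  have yk: "\<forall>k<n. y!k \<longrightarrow> k \<in> T" using y vle_iff[of y n "pt n T"] by auto
  have "\<forall>k\<in>T. y!k"
  proof (rule ccontr)
    assume "\<not> (\<forall>k\<in>T. y!k)"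
    then obtain k where k: "k \<in> T" "\<not> y!k" by blast
    have "f (pt n (T - {k}))"
      apply (rule monoD[OF pos y(1)]) using yk k y by auto
    then show False using nb k by blast
  qed
  then show "y = pt n T" using yk y T by (intro nth_equalityI) (auto simp: cube_def)
qed (use T in auto)

lemma maxF_gen:
  assumes pos: "positive_bf n f" and T: "T \<subseteq> {..<n}" "\<not> f (pt n T)"
    and nb: "\<forall>k<n. k \<notin> T \<longrightarrow> f (pt n (insert k T))"
  shows "pt n T \<in> max_false_points n f"
  unfolding max_false_points_def
proof (intro CollectI conjI ballI impI)
  fix y assume y: "y \<in> cube n" "vle (pt n T) y \<and> \<not> f y"
  have yk: "\<forall>k<n. k \<in> T \<longrightarrow> y!k" using y vle_iff[of "pt n T" n y] by auto
  have "\<forall>k<n. k \<notin> T \<longrightarrow> \<not> y!k"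
  proof (rule ccontr)
    assume "\<not> (\<forall>k<n. k \<notin> T \<longrightarrow> \<not> y!k)"
    then obtain k where k: "k < n" "k \<notin> T" "y!k" by blast
    have "f y"
      apply (rule monoD[OF pos _ y(1) _ nb[rule_format, OF k(1,2)]]) using yk k y by auto
    then show False using y by blast
  qed
  then show "y = pt n T" using yk y T by (intro nth_equalityI) (auto simp: cube_def)
qed (use T in auto)

lemma comb:
  fixes G :: "nat \<Rightarrow> nat \<Rightarrow> bool"
  assumes n: "n \<ge> 1"
    and ex: "\<forall>i<n. \<exists>j. G i j"
    and G: "\<And>i j. G i j \<Longrightarrow> i < n \<and> j < n \<and> i \<noteq> j"
    and nd: "\<And>a b c d. G a b \<Longrightarrow> G c d \<Longrightarrow> a \<noteq> c \<Longrightarrow> a \<noteq> d \<Longrightarrow> b \<noteq> c \<Longrightarrow> b \<noteq> d \<Longrightarrow> False"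
  shows "n - 1 \<le> card {{i,j} | i j. G i j}"
proof -
  let ?E = "{{i,j} | i j. G i j}"
  obtain b where b: "G 0 b" using ex n by auto
  obtain w where w: "\<And>v. v < n \<Longrightarrow> G v (w v)" using ex by metis
  define \<psi> where "\<psi> v = (if v = b then {0,b} else {v, w v})" for v
  have wv: "w v \<in> {0,b}" if "v < n" "v \<noteq> 0" "v \<noteq> b" for v
  proof (rule ccontr)
    assume "w v \<notin> {0,b}"
    then show False using nd[OF b w[OF that(1)]] that G[OF w[OF that(1)]] G[OF b] by auto
  qed
  have sub: "\<psi> ` ({..<n} - {0}) \<subseteq> ?E"
    using b w unfolding \<psi>_def by auto
  have inj: "inj_on \<psi> ({..<n} - {0})"
  proof (rule inj_onI)
    fix x y assume x: "x \<in> {..<n} - {0}" and y: "y \<in> {..<n} - {0}" and e: "\<psi> x = \<psi> y"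
    show "x = y"
    proof (cases "x = b")
      case True
      then show ?thesis using e x y wv[of y] G[OF w, of y] unfolding \<psi>_def
        by (auto simp: doubleton_eq_iff split: if_splits)
    next
      case False
      then show ?thesis using e x y wv[of y] wv[of x] G[OF w, of y] G[OF w, of x] unfolding \<psi>_def
        by (auto simp: doubleton_eq_iff split: if_splits)
    qed
  qed
  have fin: "finite ?E"
    by (rule finite_subset[of _ "Pow {..<n}"]) (auto dest: G)
  have "n - 1 = card (\<psi> ` ({..<n} - {0}))" using card_image[OF inj] n by simp
  also have "\<dots> \<le> card ?E" by (rule card_mono[OF fin sub])
  finally show ?thesis .
qed

theorem mainTheorem8:
  fixes n :: nat and f :: "bool list \<Rightarrow> bool"
  assumes "n \<ge> 1"
    and "positive_bf n f"
    and "\<not> canalyzing n f"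
    and "\<forall>i<n. canalyzing (n - 1) (restr i False f) \<and> canalyzing (n - 1) (restr i True f)"
  shows "n + 2 \<le> card (extremal_points n f)"
proof -
  note pos = assms(2)
  let ?U = "{..<n}"
  have nc: "\<not> constant_bf (n - 1) (restr i a f)" if "i < n" for i a
    using assms(3) that unfolding canalyzing_def by (cases a) auto
  have T1: "f (pt n (?U - {k}))" if k: "k < n" for k
  proof -
    obtain p where p: "p \<in> cube n" "p!k = False" "f p" using restr1(1)[OF k nc[OF k]] by blast
    show ?thesis apply (rule monoD[OF pos p(1) _ _ p(3)]) using p k by (auto simp: cube_def)
  qed
  have S1: "\<not> f (pt n {k})" if k: "k < n" for k
  proof
    assume fk: "f (pt n {k})"
    obtain q where q: "q \<in> cube n" "q!k = True" "\<not> f q" using restr1(2)[OF k nc[OF k]] by blast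
    have "f q" apply (rule monoD[OF pos _ q(1) _ fk]) using q k by auto
    then show False using q by blast
  qed
  have allT: "f (pt n ?U)" by (rule mono_pt[OF pos _ T1[of 0]]) (use assms(1) in auto)
  have bigT: "f (pt n T)" if "T \<subseteq> ?U" "card T = n - 1" for T
  proof -
    have "?U - T \<noteq> {}"
    proof
      assume "?U - T = {}"
      then have "T = ?U" using that by auto
      then show False using that assms(1) by simp
    qed
    then obtain l where l: "l < n" "l \<notin> T" by blast
    have "T = ?U - {l}"
      by (rule card_subset_eq) (use that l in auto)
    then show ?thesis using T1 l by simp
  qed
  have smallT: "\<not> f (pt n T)" if "T \<subseteq> ?U" "card T \<le> 1" for T
  proof
    assume fT: "f (pt n T)"
    have finT: "finite T" using that finite_subset by blast
    obtain k where "k < n" "T \<inter> ?U \<subseteq> {k}"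
    proof (cases "T = {}")
      case True then show ?thesis using that(1)[of 0] assms(1) by auto
    next
      case False
      then obtain k where "k \<in> T" by blast
      then have "T \<subseteq> {k}" using card_le_Suc0_iff_eq[OF finT] \<open>card T \<le> 1\<close> by auto
      then show ?thesis using that(1)[of k] \<open>k \<in> T\<close> \<open>T \<subseteq> ?U\<close> by auto
    qed
    then show False using S1 mono_pt[OF pos _ fT] by blast
  qed
  have n2: "n \<ge> 2"
  proof (rule ccontr)
    assume "\<not> n \<ge> 2"
    then have "n = 1" using assms(1) by simp
    then show False using assms(4) unfolding canalyzing_def by auto
  qed
  define G1 where "G1 i j = (i < n \<and> j < n \<and> i \<noteq> j \<and> f (pt n {i,j}))" for i j
  define G0 where "G0 i j = (i < n \<and> j < n \<and> i \<noteq> j \<and> \<not> f (pt n (?U - {i,j})))" for i j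
  have ex1: "\<forall>i<n. \<exists>j. G1 i j"
  proof (intro allI impI)
    fix i assume i: "i < n"
    obtain j a where j: "j < n - 1" "constant_bf (n - 1 - 1) (restr j a (restr i True f))"
      using assms(4) i unfolding canalyzing_def by blast
    obtain k where k: "k < n" "k \<noteq> i" and C: "\<forall>p\<in>cube n. \<forall>q\<in>cube n. p!i = True \<longrightarrow> q!i = True \<longrightarrow> p!k = a \<longrightarrow> q!k = a \<longrightarrow> f p = f q"
      using restr2[OF i j] by blast
    show "\<exists>j. G1 i j"
    proof (cases a)
      case True
      then have "f (pt n {i,k}) = f (pt n ?U)" using C i k by simp
      then show ?thesis using allT i k unfolding G1_def by blast
    next
      case False
      then have "f (pt n {i}) = f (pt n (?U - {k}))" using C i k by simp
      then show ?thesis using S1[OF i] T1[OF \<open>k < n\<close>] by simp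
    qed
  qed
  have ex0: "\<forall>i<n. \<exists>j. G0 i j"
  proof (intro allI impI)
    fix i assume i: "i < n"
    obtain j a where j: "j < n - 1" "constant_bf (n - 1 - 1) (restr j a (restr i False f))"
      using assms(4) i unfolding canalyzing_def by blast
    obtain k where k: "k < n" "k \<noteq> i" and C: "\<forall>p\<in>cube n. \<forall>q\<in>cube n. p!i = False \<longrightarrow> q!i = False \<longrightarrow> p!k = a \<longrightarrow> q!k = a \<longrightarrow> f p = f q"
      using restr2[OF i j] by blast
    show "\<exists>j. G0 i j"
    proof (cases a)
      case False
      then have "f (pt n (?U - {i,k})) = f (pt n {})" using C i k by simp
      moreover have "\<not> f (pt n {})" using smallT by simp
      ultimately show ?thesis using i k unfolding G0_def by blast
    next
      case True
      then have "f (pt n {k}) = f (pt n (?U - {i}))" using C i k by simp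
      then show ?thesis using S1[OF \<open>k < n\<close>] T1[OF i] by simp
    qed
  qed
  have pairT: "pt n {i,j} \<in> min_true_points n f" if "G1 i j" for i j
    apply (rule minT_gen[OF pos])
    using that unfolding G1_def apply auto[2]
    apply (intro ballI smallT) using that unfolding G1_def by (auto simp: card_insert_if)
  have pairF: "pt n (?U - {i,j}) \<in> max_false_points n f" if "G0 i j" for i j
    apply (rule maxF_gen[OF pos])
    using that unfolding G0_def apply auto[2]
  proof (intro allI impI)
    fix k assume k: "k < n" "k \<notin> ?U - {i,j}"
    then have "k = i \<or> k = j" by auto
    then have "insert k (?U - {i,j}) = ?U - {j} \<or> insert k (?U - {i,j}) = ?U - {i}"
      using that k unfolding G0_def by auto
    then show "f (pt n (insert k (?U - {i, j})))"
    proof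
      assume "insert k (?U - {i,j}) = ?U - {j}" then show ?thesis using T1 that unfolding G0_def by simp
    next
      assume "insert k (?U - {i,j}) = ?U - {i}" then show ?thesis using T1 that unfolding G0_def by simp
    qed
  qed
  have finT: "finite (min_true_points n f)" and finF: "finite (max_false_points n f)"
    by (rule finite_subset[OF _ finite_cube], auto simp: min_true_points_def max_false_points_def)+
  have disj: "min_true_points n f \<inter> max_false_points n f = {}"
    by (auto simp: min_true_points_def max_false_points_def)
  have card_ext: "card (extremal_points n f) = card (min_true_points n f) + card (max_false_points n f)"
    unfolding extremal_points_def using card_Un_disjoint[OF finT finF disj] by (simp add: Un_commute)
  have finE: "finite (extremal_points n f)" using finT finF by (simp add: extremal_points_def)
  have n3: "n \<ge> 3"
  proof (rule ccontr)
    assume "\<not> n \<ge> 3" then have "n = 2" using n2 by simp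
    moreover have "{..<2::nat} - {1} = {0}" by auto
    ultimately show False using S1[of 0] T1[of 1] by simp
  qed
  show ?thesis
  proof (cases "n = 3")
    case True
    have mp: "pt n {i,j} \<in> extremal_points n f" if "i < n" "j < n" "i \<noteq> j" for i j
    proof -
      have "f (pt n {i,j})" by (rule bigT) (use that True in auto)
      then show ?thesis using pairT[of i j] that unfolding G1_def extremal_points_def by auto
    qed
    have sp: "pt n {i} \<in> extremal_points n f" if "i < n" for i
    proof -
      have "pt n {i} \<in> max_false_points n f"
      proof (rule maxF_gen[OF pos])
        show "{i} \<subseteq> ?U" "\<not> f (pt n {i})" using that S1 by auto
        show "\<forall>k<n. k \<notin> {i} \<longrightarrow> f (pt n (insert k {i}))"
        proof (intro allI impI)
          fix k assume "k < n" "k \<notin> {i}"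
          then show "f (pt n (insert k {i}))" using that True by (intro bigT) auto
        qed
      qed
      then show ?thesis unfolding extremal_points_def by auto
    qed
    let ?P = "{pt n {0,1}, pt n {0,2}, pt n {1,2}, pt n {0}, pt n {1}, pt n {2}}"
    have sub: "?P \<subseteq> extremal_points n f"
      using mp[of 0 1] mp[of 0 2] mp[of 1 2] sp[of 0] sp[of 1] sp[of 2] True by simp
    have "card ?P = 6"
      unfolding True by (simp add: pt_def upt_rec)
    then show ?thesis using card_mono[OF finE sub] True by simp
  next
    case n_ne3: False
    show ?thesis
    proof (cases "n = 4")
      case True
      have mp: "pt n {i,j} \<in> extremal_points n f" if "i < n" "j < n" "i \<noteq> j" for i j
      proof (cases "f (pt n {i,j})")
        case True
        then show ?thesis using pairT[of i j] that unfolding G1_def extremal_points_def by auto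
      next
        case False
        have "pt n {i,j} \<in> max_false_points n f"
        proof (rule maxF_gen[OF pos])
          show "{i,j} \<subseteq> ?U" "\<not> f (pt n {i,j})" using that False by auto
          show "\<forall>k<n. k \<notin> {i,j} \<longrightarrow> f (pt n (insert k {i,j}))"
          proof (intro allI impI)
            fix k assume "k < n" "k \<notin> {i,j}"
            then show "f (pt n (insert k {i,j}))" using that \<open>n = 4\<close> by (intro bigT) auto
          qed
        qed
        then show ?thesis unfolding extremal_points_def by auto
      qed
      let ?P = "{pt n {0,1}, pt n {0,2}, pt n {0,3}, pt n {1,2}, pt n {1,3}, pt n {2,3}}"
      have sub: "?P \<subseteq> extremal_points n f"
        using mp[of 0 1] mp[of 0 2] mp[of 0 3] mp[of 1 2] mp[of 1 3] mp[of 2 3] True by simp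
      have "card ?P = 6"
        unfolding True by (simp add: pt_def upt_rec)
      then show ?thesis using card_mono[OF finE sub] True by simp
    next
      case False
      then have n5: "n \<ge> 5" using n3 n_ne3 by simp
      have fresh: "\<exists>v<n. v \<notin> {a,b,c,d}" for a b c d :: nat
      proof (rule ccontr)
        assume "\<not> (\<exists>v<n. v \<notin> {a,b,c,d})"
        then have "?U \<subseteq> {a,b,c,d}" by auto
        then have "card ?U \<le> card {a,b,c,d}" by (intro card_mono) auto
        also have "\<dots> \<le> 4" by (simp add: card_insert_if)
        finally show False using n5 by simp
      qed
      have nd1: False if "G1 a b" "G1 c d" "a \<noteq> c" "a \<noteq> d" "b \<noteq> c" "b \<noteq> d" for a b c d
      proof -
        obtain v where v: "v < n" "v \<notin> {a,b,c,d}" using fresh by blast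
        obtain w where w: "G0 v w" using ex0 v by blast
        have "w \<notin> {a,b} \<or> w \<notin> {c,d}" using that by auto
        then show False
        proof
          assume "w \<notin> {a,b}"
          then have "f (pt n (?U - {v,w}))"
            using mono_pt[OF pos _ that(1)[unfolded G1_def, THEN conjunct2, THEN conjunct2, THEN conjunct2]] v that(1)
            unfolding G1_def by auto
          then show False using w unfolding G0_def by simp
        next
          assume "w \<notin> {c,d}"
          then have "f (pt n (?U - {v,w}))"
            using mono_pt[OF pos _ that(2)[unfolded G1_def, THEN conjunct2, THEN conjunct2, THEN conjunct2]] v that(2)
            unfolding G1_def by auto
          then show False using w unfolding G0_def by simp
        qed
      qed
      have nd0: False if "G0 a b" "G0 c d" "a \<noteq> c" "a \<noteq> d" "b \<noteq> c" "b \<noteq> d" for a b c d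
      proof -
        obtain v where v: "v < n" "v \<notin> {a,b,c,d}" using fresh by blast
        obtain w where w: "G1 v w" using ex1 v by blast
        have "w \<notin> {a,b} \<or> w \<notin> {c,d}" using that by auto
        then show False
        proof
          assume "w \<notin> {a,b}"
          then have "f (pt n (?U - {a,b}))"
            using mono_pt[OF pos _ w[unfolded G1_def, THEN conjunct2, THEN conjunct2, THEN conjunct2]] v w
            unfolding G1_def by auto
          then show False using that(1) unfolding G0_def by simp
        next
          assume "w \<notin> {c,d}"
          then have "f (pt n (?U - {c,d}))"
            using mono_pt[OF pos _ w[unfolded G1_def, THEN conjunct2, THEN conjunct2, THEN conjunct2]] v w
            unfolding G1_def by auto
          then show False using that(2) unfolding G0_def by simp
        qed
      qed
      have c1: "n - 1 \<le> card {{i,j} | i j. G1 i j}"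
        by (rule comb[OF assms(1) ex1]) (auto simp: G1_def intro: nd1)
      have c0: "n - 1 \<le> card {{i,j} | i j. G0 i j}"
        by (rule comb[OF assms(1) ex0]) (auto simp: G0_def intro: nd0)
      have "card {{i,j} | i j. G1 i j} = card (pt n ` {{i,j} | i j. G1 i j})"
        by (rule card_image[symmetric], rule inj_onI, rule pt_inj) (auto simp: G1_def)
      also have "\<dots> \<le> card (min_true_points n f)"
        by (rule card_mono[OF finT]) (use pairT in auto)
      finally have m1: "n - 1 \<le> card (min_true_points n f)" using c1 by simp
      have "card {{i,j} | i j. G0 i j} = card ((\<lambda>S. pt n (?U - S)) ` {{i,j} | i j. G0 i j})"
      proof (rule card_image[symmetric], rule inj_onI)
        fix S T assume S: "S \<in> {{i,j} | i j. G0 i j}" and T: "T \<in> {{i,j} | i j. G0 i j}"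
          and e: "pt n (?U - S) = pt n (?U - T)"
        have "?U - S = ?U - T" by (rule pt_inj[OF _ _ e]) auto
        moreover have "S \<subseteq> ?U" "T \<subseteq> ?U" using S T by (auto simp: G0_def)
        ultimately show "S = T" by (metis double_diff order_refl)
      qed
      also have "\<dots> \<le> card (max_false_points n f)"
        by (rule card_mono[OF finF]) (use pairF in auto)
      finally have m0: "n - 1 \<le> card (max_false_points n f)" using c0 by simp
      show ?thesis using m0 m1 card_ext n5 by simp
    qed
  qed
qed

end
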